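(* Let $(A,m,i)$ be a monoid in $\mathcal V$, let $(M,\mu,\nu)$ be an $A$-bimodule, and let $d\colon A\to M$ be a morphism in $\mathcal V$ satisfying the Leibniz rule $d\circ m = d\cdot 1_A + 1_A\cdot d$ (as morphisms $A\otimes A\to M$). Then the following are equivalent: (i) $1_A\cdot d=\mu\circ(1_A\otimes d)\colon A\otimes A\to M$ is an epimorphism in $\mathcal V$; (ii) $d\cdot 1_A=\nu\circ(d\otimes 1_A)\colon A\otimes A\to M$ is an epimorphism in $\mathcal V$; (iii) $1_A\cdot d\cdot 1_A\colon A\otimes A\otimes A\to M$ is an epimorphism in $\mathcal V$.
   Context: $\mathcal V$ is a monoidal additive category: a monoidal category which is $\mathbf{Ab}$-enriched with finite biproducts, whose tensor product is additive in each variable, and which has finite limits and colimits. A monoid $(A,m,i)$ in $\mathcal V$ has multiplication $m\colon A\otimes A\to A$ and unit $i\colon I\to A$. An $A$-bimodule $(M,\mu,\nu)$ has left action $\mu\colon A\otimes M\to M$ and right action $\nu\colon M\otimes A\to M$, each satisfying associativity and unit axioms, and compatible with each other. Notation: for morphisms $f\colon X\to M$ and $g\colon Y\to A$, $g\cdot f:=\mu\circ(g\otimes f)\colon Y\otimes X\to M$ and $f\cdot g:=\nu\circ(f\otimes g)$; $1_A\cdot d\cdot 1_A$ denotes the morphism $A\otimes A\otimes A\to M$ obtained by applying $d$ to the middle factor and then both actions (associators suppressed). *)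

theory Defs
  imports Main
begin

text \<open>Objects have type 'o, morphisms type 'm; the actual objects and
morphisms form the carriers Obj and Arr.  Composition Comp g f is "g after f".
Operations are total functions, only meaningful on the carriers.\<close>

record ('o, 'm) moncat =
  Obj   :: "'o set"
  Arr   :: "'m set"
  Dom   :: "'m \<Rightarrow> 'o"
  Cod   :: "'m \<Rightarrow> 'o"
  Ide   :: "'o \<Rightarrow> 'm"
  Comp  :: "'m \<Rightarrow> 'm \<Rightarrow> 'm"
  Zm    :: "'o \<Rightarrow> 'o \<Rightarrow> 'm"
  Add   :: "'m \<Rightarrow> 'm \<Rightarrow> 'm"
  Neg   :: "'m \<Rightarrow> 'm"
  TOb   :: "'o \<Rightarrow> 'o \<Rightarrow> 'o"
  Tens  :: "'m \<Rightarrow> 'm \<Rightarrow> 'm"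
  Unit  :: "'o"
  Assoc :: "'o \<Rightarrow> 'o \<Rightarrow> 'o \<Rightarrow> 'm"
  LUnit :: "'o \<Rightarrow> 'm"
  RUnit :: "'o \<Rightarrow> 'm"

definition Hom :: "('o, 'm, 'x) moncat_scheme \<Rightarrow> 'o \<Rightarrow> 'o \<Rightarrow> 'm set" where
  "Hom C a b = {f \<in> Arr C. Dom C f = a \<and> Cod C f = b}"

definition is_category :: "('o, 'm, 'x) moncat_scheme \<Rightarrow> bool" where
  "is_category C \<longleftrightarrow>
     (\<forall>f\<in>Arr C. Dom C f \<in> Obj C \<and> Cod C f \<in> Obj C) \<and>
     (\<forall>a\<in>Obj C. Ide C a \<in> Hom C a a) \<and>
     (\<forall>f\<in>Arr C. \<forall>g\<in>Arr C. Cod C f = Dom C g \<longrightarrow> Comp C g f \<in> Hom C (Dom C f) (Cod C g)) \<and>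
     (\<forall>f\<in>Arr C. Comp C (Ide C (Cod C f)) f = f \<and> Comp C f (Ide C (Dom C f)) = f) \<and>
     (\<forall>f\<in>Arr C. \<forall>g\<in>Arr C. \<forall>h\<in>Arr C. Cod C f = Dom C g \<longrightarrow> Cod C g = Dom C h \<longrightarrow>
        Comp C h (Comp C g f) = Comp C (Comp C h g) f)"

definition is_iso :: "('o, 'm, 'x) moncat_scheme \<Rightarrow> 'm \<Rightarrow> bool" where
  "is_iso C f \<longleftrightarrow> f \<in> Arr C \<and> (\<exists>g \<in> Hom C (Cod C f) (Dom C f).
      Comp C g f = Ide C (Dom C f) \<and> Comp C f g = Ide C (Cod C f))"

definition is_epi :: "('o, 'm, 'x) moncat_scheme \<Rightarrow> 'm \<Rightarrow> bool" where
  "is_epi C f \<longleftrightarrow> f \<in> Arr C \<and> (\<forall>g\<in>Arr C. \<forall>h\<in>Arr C.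
      Dom C g = Cod C f \<longrightarrow> Dom C h = Cod C f \<longrightarrow> Cod C g = Cod C h \<longrightarrow>
      Comp C g f = Comp C h f \<longrightarrow> g = h)"

definition ab_enriched :: "('o, 'm, 'x) moncat_scheme \<Rightarrow> bool" where
  "ab_enriched C \<longleftrightarrow>
     (\<forall>a\<in>Obj C. \<forall>b\<in>Obj C.
        Zm C a b \<in> Hom C a b \<and>
        (\<forall>f\<in>Hom C a b. \<forall>g\<in>Hom C a b. Add C f g \<in> Hom C a b) \<and>
        (\<forall>f\<in>Hom C a b. Neg C f \<in> Hom C a b) \<and>
        (\<forall>f\<in>Hom C a b. \<forall>g\<in>Hom C a b. \<forall>h\<in>Hom C a b. Add C (Add C f g) h = Add C f (Add C g h)) \<and>
        (\<forall>f\<in>Hom C a b. \<forall>g\<in>Hom C a b. Add C f g = Add C g f) \<and>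
        (\<forall>f\<in>Hom C a b. Add C f (Zm C a b) = f) \<and>
        (\<forall>f\<in>Hom C a b. Add C f (Neg C f) = Zm C a b)) \<and>
     (\<forall>a\<in>Obj C. \<forall>b\<in>Obj C. \<forall>c\<in>Obj C.
        (\<forall>f1\<in>Hom C a b. \<forall>f2\<in>Hom C a b. \<forall>g\<in>Hom C b c.
            Comp C g (Add C f1 f2) = Add C (Comp C g f1) (Comp C g f2)) \<and>
        (\<forall>f\<in>Hom C a b. \<forall>g1\<in>Hom C b c. \<forall>g2\<in>Hom C b c.
            Comp C (Add C g1 g2) f = Add C (Comp C g1 f) (Comp C g2 f)))"

definition has_finite_biproducts :: "('o, 'm, 'x) moncat_scheme \<Rightarrow> bool" where
  "has_finite_biproducts C \<longleftrightarrow>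
     (\<exists>z\<in>Obj C. \<forall>a\<in>Obj C. (\<exists>!f. f \<in> Hom C z a) \<and> (\<exists>!f. f \<in> Hom C a z)) \<and>
     (\<forall>a\<in>Obj C. \<forall>b\<in>Obj C. \<exists>c\<in>Obj C. \<exists>p1\<in>Hom C c a. \<exists>p2\<in>Hom C c b.
        \<exists>i1\<in>Hom C a c. \<exists>i2\<in>Hom C b c.
        Comp C p1 i1 = Ide C a \<and> Comp C p2 i2 = Ide C b \<and>
        Comp C p1 i2 = Zm C b a \<and> Comp C p2 i1 = Zm C a b \<and>
        Add C (Comp C i1 p1) (Comp C i2 p2) = Ide C c)"

definition has_finite_limits :: "('o, 'm, 'x) moncat_scheme \<Rightarrow> bool" where
  "has_finite_limits C \<longleftrightarrow>
     (\<exists>t\<in>Obj C. \<forall>a\<in>Obj C. \<exists>!f. f \<in> Hom C a t) \<and>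
     (\<forall>a\<in>Obj C. \<forall>b\<in>Obj C. \<exists>c\<in>Obj C. \<exists>p1\<in>Hom C c a. \<exists>p2\<in>Hom C c b.
        \<forall>x\<in>Obj C. \<forall>f\<in>Hom C x a. \<forall>g\<in>Hom C x b.
          \<exists>!u. u \<in> Hom C x c \<and> Comp C p1 u = f \<and> Comp C p2 u = g) \<and>
     (\<forall>a\<in>Obj C. \<forall>b\<in>Obj C. \<forall>f\<in>Hom C a b. \<forall>g\<in>Hom C a b.
        \<exists>e\<in>Obj C. \<exists>k\<in>Hom C e a. Comp C f k = Comp C g k \<and>
          (\<forall>x\<in>Obj C. \<forall>h\<in>Hom C x a. Comp C f h = Comp C g h \<longrightarrow>
             (\<exists>!u. u \<in> Hom C x e \<and> Comp C k u = h)))"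

definition has_finite_colimits :: "('o, 'm, 'x) moncat_scheme \<Rightarrow> bool" where
  "has_finite_colimits C \<longleftrightarrow>
     (\<exists>t\<in>Obj C. \<forall>a\<in>Obj C. \<exists>!f. f \<in> Hom C t a) \<and>
     (\<forall>a\<in>Obj C. \<forall>b\<in>Obj C. \<exists>c\<in>Obj C. \<exists>i1\<in>Hom C a c. \<exists>i2\<in>Hom C b c.
        \<forall>x\<in>Obj C. \<forall>f\<in>Hom C a x. \<forall>g\<in>Hom C b x.
          \<exists>!u. u \<in> Hom C c x \<and> Comp C u i1 = f \<and> Comp C u i2 = g) \<and>
     (\<forall>a\<in>Obj C. \<forall>b\<in>Obj C. \<forall>f\<in>Hom C a b. \<forall>g\<in>Hom C a b.
        \<exists>e\<in>Obj C. \<exists>q\<in>Hom C b e. Comp C q f = Comp C q g \<and>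
          (\<forall>x\<in>Obj C. \<forall>h\<in>Hom C b x. Comp C h f = Comp C h g \<longrightarrow>
             (\<exists>!u. u \<in> Hom C e x \<and> Comp C u q = h)))"

definition is_monoidal :: "('o, 'm, 'x) moncat_scheme \<Rightarrow> bool" where
  "is_monoidal C \<longleftrightarrow>
     Unit C \<in> Obj C \<and>
     (\<forall>a\<in>Obj C. \<forall>b\<in>Obj C. TOb C a b \<in> Obj C) \<and>
     (\<forall>f\<in>Arr C. \<forall>g\<in>Arr C. Tens C f g \<in> Hom C (TOb C (Dom C f) (Dom C g)) (TOb C (Cod C f) (Cod C g))) \<and>
     (\<forall>a\<in>Obj C. \<forall>b\<in>Obj C. Tens C (Ide C a) (Ide C b) = Ide C (TOb C a b)) \<and>
     (\<forall>f\<in>Arr C. \<forall>g\<in>Arr C. \<forall>h\<in>Arr C. \<forall>k\<in>Arr C. Cod C f = Dom C g \<longrightarrow> Cod C h = Dom C k \<longrightarrow>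
        Tens C (Comp C g f) (Comp C k h) = Comp C (Tens C g k) (Tens C f h)) \<and>
     (\<forall>a\<in>Obj C. \<forall>b\<in>Obj C. \<forall>c\<in>Obj C.
        Assoc C a b c \<in> Hom C (TOb C (TOb C a b) c) (TOb C a (TOb C b c)) \<and> is_iso C (Assoc C a b c)) \<and>
     (\<forall>f\<in>Arr C. \<forall>g\<in>Arr C. \<forall>h\<in>Arr C.
        Comp C (Assoc C (Cod C f) (Cod C g) (Cod C h)) (Tens C (Tens C f g) h) =
        Comp C (Tens C f (Tens C g h)) (Assoc C (Dom C f) (Dom C g) (Dom C h))) \<and>
     (\<forall>a\<in>Obj C. LUnit C a \<in> Hom C (TOb C (Unit C) a) a \<and> is_iso C (LUnit C a)) \<and>
     (\<forall>a\<in>Obj C. RUnit C a \<in> Hom C (TOb C a (Unit C)) a \<and> is_iso C (RUnit C a)) \<and>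
     (\<forall>f\<in>Arr C. Comp C (LUnit C (Cod C f)) (Tens C (Ide C (Unit C)) f) = Comp C f (LUnit C (Dom C f))) \<and>
     (\<forall>f\<in>Arr C. Comp C (RUnit C (Cod C f)) (Tens C f (Ide C (Unit C))) = Comp C f (RUnit C (Dom C f))) \<and>
     (\<forall>a\<in>Obj C. \<forall>b\<in>Obj C. \<forall>c\<in>Obj C. \<forall>d\<in>Obj C.
        Comp C (Assoc C a b (TOb C c d)) (Assoc C (TOb C a b) c d) =
        Comp C (Tens C (Ide C a) (Assoc C b c d))
          (Comp C (Assoc C a (TOb C b c) d) (Tens C (Assoc C a b c) (Ide C d)))) \<and>
     (\<forall>a\<in>Obj C. \<forall>b\<in>Obj C.
        Comp C (Tens C (Ide C a) (LUnit C b)) (Assoc C a (Unit C) b) = Tens C (RUnit C a) (Ide C b))"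

definition tensor_additive :: "('o, 'm, 'x) moncat_scheme \<Rightarrow> bool" where
  "tensor_additive C \<longleftrightarrow>
     (\<forall>f\<in>Arr C. \<forall>g\<in>Arr C. \<forall>h\<in>Arr C. Dom C f = Dom C g \<longrightarrow> Cod C f = Cod C g \<longrightarrow>
        Tens C (Add C f g) h = Add C (Tens C f h) (Tens C g h) \<and>
        Tens C h (Add C f g) = Add C (Tens C h f) (Tens C h g))"

definition monoidal_additive_category :: "('o, 'm, 'x) moncat_scheme \<Rightarrow> bool" where
  "monoidal_additive_category C \<longleftrightarrow>
     is_category C \<and> ab_enriched C \<and> has_finite_biproducts C \<and> is_monoidal C \<and>
     tensor_additive C \<and> has_finite_limits C \<and> has_finite_colimits C"

definition is_monoid :: "('o, 'm, 'x) moncat_scheme \<Rightarrow> 'o \<Rightarrow> 'm \<Rightarrow> 'm \<Rightarrow> bool" where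
  "is_monoid C A m i \<longleftrightarrow>
     A \<in> Obj C \<and> m \<in> Hom C (TOb C A A) A \<and> i \<in> Hom C (Unit C) A \<and>
     Comp C m (Tens C m (Ide C A)) = Comp C m (Comp C (Tens C (Ide C A) m) (Assoc C A A A)) \<and>
     Comp C m (Tens C i (Ide C A)) = LUnit C A \<and>
     Comp C m (Tens C (Ide C A) i) = RUnit C A"

definition is_bimodule ::
  "('o, 'm, 'x) moncat_scheme \<Rightarrow> 'o \<Rightarrow> 'm \<Rightarrow> 'm \<Rightarrow> 'o \<Rightarrow> 'm \<Rightarrow> 'm \<Rightarrow> bool" where
  "is_bimodule C A m i M \<mu> \<nu> \<longleftrightarrow>
     M \<in> Obj C \<and> \<mu> \<in> Hom C (TOb C A M) M \<and> \<nu> \<in> Hom C (TOb C M A) M \<and>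
     Comp C \<mu> (Tens C m (Ide C M)) = Comp C \<mu> (Comp C (Tens C (Ide C A) \<mu>) (Assoc C A A M)) \<and>
     Comp C \<mu> (Tens C i (Ide C M)) = LUnit C M \<and>
     Comp C \<nu> (Tens C \<nu> (Ide C A)) = Comp C \<nu> (Comp C (Tens C (Ide C M) m) (Assoc C M A A)) \<and>
     Comp C \<nu> (Tens C (Ide C M) i) = RUnit C M \<and>
     Comp C \<nu> (Tens C \<mu> (Ide C A)) = Comp C \<mu> (Comp C (Tens C (Ide C A) \<nu>) (Assoc C A M A))"

end

theory Submission
  imports Defs
begin

locale mac =
  fixes C :: "('o, 'm) moncat"
  assumes mac: "monoidal_additive_category C"
begin

lemma cat: "is_category C" using mac by (simp add: monoidal_additive_category_def)
lemma ab: "ab_enriched C" using mac by (simp add: monoidal_additive_category_def)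
lemma mon: "is_monoidal C" using mac by (simp add: monoidal_additive_category_def)
lemma tadd: "tensor_additive C" using mac by (simp add: monoidal_additive_category_def)

lemma homD: assumes "f \<in> Hom C a b" shows "f \<in> Arr C" "Dom C f = a" "Cod C f = b"
  using assms by (auto simp: Hom_def)

lemma homI: "f \<in> Arr C \<Longrightarrow> f \<in> Hom C (Dom C f) (Cod C f)"
  by (simp add: Hom_def)

lemma hom_obj: assumes "f \<in> Hom C a b" shows "a \<in> Obj C" "b \<in> Obj C"
  using assms cat by (auto simp: Hom_def is_category_def)

lemma ide_hom: "a \<in> Obj C \<Longrightarrow> Ide C a \<in> Hom C a a"
  using cat by (simp add: is_category_def)

lemma comp_hom: "f \<in> Hom C a b \<Longrightarrow> g \<in> Hom C b c \<Longrightarrow> Comp C g f \<in> Hom C a c"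
  using cat unfolding is_category_def Hom_def by auto

lemma comp_assoc: "f \<in> Hom C a b \<Longrightarrow> g \<in> Hom C b c \<Longrightarrow> h \<in> Hom C c e \<Longrightarrow>
   Comp C h (Comp C g f) = Comp C (Comp C h g) f"
  using cat unfolding is_category_def Hom_def by auto

lemma id_left: "f \<in> Hom C a b \<Longrightarrow> Comp C (Ide C b) f = f"
  using cat unfolding is_category_def Hom_def by auto
lemma id_right: "f \<in> Hom C a b \<Longrightarrow> Comp C f (Ide C a) = f"
  using cat unfolding is_category_def Hom_def by auto

lemma tens_hom: "f \<in> Hom C a b \<Longrightarrow> g \<in> Hom C c e \<Longrightarrow> Tens C f g \<in> Hom C (TOb C a c) (TOb C b e)"
  using mon unfolding is_monoidal_def Hom_def by auto

lemma tob_obj: "a \<in> Obj C \<Longrightarrow> b \<in> Obj C \<Longrightarrow> TOb C a b \<in> Obj C"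
  using mon unfolding is_monoidal_def by auto

lemma unit_obj: "Unit C \<in> Obj C"
  using mon unfolding is_monoidal_def by auto

lemma tens_ide: "a \<in> Obj C \<Longrightarrow> b \<in> Obj C \<Longrightarrow> Tens C (Ide C a) (Ide C b) = Ide C (TOb C a b)"
  using mon unfolding is_monoidal_def by auto

lemma interchange: "f \<in> Hom C a b \<Longrightarrow> g \<in> Hom C b c \<Longrightarrow> h \<in> Hom C a' b' \<Longrightarrow> k \<in> Hom C b' c' \<Longrightarrow>
   Tens C (Comp C g f) (Comp C k h) = Comp C (Tens C g k) (Tens C f h)"
  using mon unfolding is_monoidal_def Hom_def by auto

lemma assoc_hom: "a \<in> Obj C \<Longrightarrow> b \<in> Obj C \<Longrightarrow> c \<in> Obj C \<Longrightarrow>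
   Assoc C a b c \<in> Hom C (TOb C (TOb C a b) c) (TOb C a (TOb C b c))"
  using mon unfolding is_monoidal_def by auto

lemma assoc_nat: "f \<in> Hom C a a' \<Longrightarrow> g \<in> Hom C b b' \<Longrightarrow> h \<in> Hom C c c' \<Longrightarrow>
   Comp C (Assoc C a' b' c') (Tens C (Tens C f g) h) = Comp C (Tens C f (Tens C g h)) (Assoc C a b c)"
  using mon unfolding is_monoidal_def Hom_def by auto

lemma runit_hom: "a \<in> Obj C \<Longrightarrow> RUnit C a \<in> Hom C (TOb C a (Unit C)) a"
  using mon unfolding is_monoidal_def by auto
lemma lunit_hom: "a \<in> Obj C \<Longrightarrow> LUnit C a \<in> Hom C (TOb C (Unit C) a) a"
  using mon unfolding is_monoidal_def by auto
lemma runit_iso: "a \<in> Obj C \<Longrightarrow> is_iso C (RUnit C a)"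
  using mon unfolding is_monoidal_def by auto
lemma lunit_iso: "a \<in> Obj C \<Longrightarrow> is_iso C (LUnit C a)"
  using mon unfolding is_monoidal_def by auto

lemma runit_nat: "f \<in> Hom C a b \<Longrightarrow>
  Comp C (RUnit C b) (Tens C f (Ide C (Unit C))) = Comp C f (RUnit C a)"
  using mon unfolding is_monoidal_def Hom_def by auto
lemma lunit_nat: "f \<in> Hom C a b \<Longrightarrow>
  Comp C (LUnit C b) (Tens C (Ide C (Unit C)) f) = Comp C f (LUnit C a)"
  using mon unfolding is_monoidal_def Hom_def by auto

lemma iso_cancel: assumes "is_iso C f" "g \<in> Arr C" "h \<in> Arr C" "Dom C g = Cod C f" "Dom C h = Cod C f"
  "Comp C g f = Comp C h f" shows "g = h"
proof -
  from assms(1) obtain u where u: "u \<in> Hom C (Cod C f) (Dom C f)" "Comp C f u = Ide C (Cod C f)"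
    and f: "f \<in> Arr C" unfolding is_iso_def by auto
  have fh: "f \<in> Hom C (Dom C f) (Cod C f)" using f by (rule homI)
  have gh: "g \<in> Hom C (Cod C f) (Cod C g)" using homI[OF assms(2)] assms(4) by simp
  have hh: "h \<in> Hom C (Cod C f) (Cod C h)" using homI[OF assms(3)] assms(5) by simp
  have "g = Comp C g (Ide C (Cod C f))" using id_right[OF homI[OF assms(2)]] assms(4) by simp
  also have "\<dots> = Comp C (Comp C g f) u" using u comp_assoc[OF u(1) fh gh] assms(4) by simp
  also have "\<dots> = Comp C (Comp C h f) u" using assms(6) by simp
  also have "\<dots> = Comp C h (Ide C (Cod C f))" using u comp_assoc[OF u(1) fh hh] assms(5) by simp
  also have "\<dots> = h" using id_right[OF homI[OF assms(3)]] assms(5) by simp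
  finally show ?thesis .
qed

lemma add_hom: "f \<in> Hom C a b \<Longrightarrow> g \<in> Hom C a b \<Longrightarrow> Add C f g \<in> Hom C a b"
  using ab hom_obj unfolding ab_enriched_def by blast

lemma add_comm: "f \<in> Hom C a b \<Longrightarrow> g \<in> Hom C a b \<Longrightarrow> Add C f g = Add C g f"
  using ab hom_obj unfolding ab_enriched_def by blast

lemma add_cancel: assumes "x \<in> Hom C a b" "y \<in> Hom C a b" "z \<in> Hom C a b"
  "Add C x z = Add C y z" shows "x = y"
proof -
  have ob: "a \<in> Obj C" "b \<in> Obj C" using hom_obj assms(1) by auto
  have G: "\<And>f g h. f \<in> Hom C a b \<Longrightarrow> g \<in> Hom C a b \<Longrightarrow> h \<in> Hom C a b \<Longrightarrow>
     Add C (Add C f g) h = Add C f (Add C g h)"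
    "\<And>f. f \<in> Hom C a b \<Longrightarrow> Add C f (Zm C a b) = f"
    "\<And>f. f \<in> Hom C a b \<Longrightarrow> Add C f (Neg C f) = Zm C a b"
    "\<And>f. f \<in> Hom C a b \<Longrightarrow> Neg C f \<in> Hom C a b"
    using ab ob unfolding ab_enriched_def by blast+
  have nz: "Neg C z \<in> Hom C a b" using G(4) assms(3) .
  have "x = Add C x (Add C z (Neg C z))" using G(2,3) assms(1,3) by simp
  also have "\<dots> = Add C (Add C x z) (Neg C z)" using G(1)[OF assms(1,3) nz] by simp
  also have "\<dots> = Add C (Add C y z) (Neg C z)" by (simp only: assms(4))
  also have "\<dots> = Add C y (Add C z (Neg C z))" using G(1)[OF assms(2,3) nz] by simp
  also have "\<dots> = y" using G(2,3) assms(2,3) by simp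
  finally show ?thesis .
qed

lemma comp_add: "f1 \<in> Hom C a b \<Longrightarrow> f2 \<in> Hom C a b \<Longrightarrow> g \<in> Hom C b c \<Longrightarrow>
   Comp C g (Add C f1 f2) = Add C (Comp C g f1) (Comp C g f2)"
  using ab hom_obj unfolding ab_enriched_def by blast

lemma tens_add: "f \<in> Hom C a b \<Longrightarrow> g \<in> Hom C a b \<Longrightarrow> h \<in> Arr C \<Longrightarrow>
   Tens C (Add C f g) h = Add C (Tens C f h) (Tens C g h)"
  using tadd unfolding tensor_additive_def Hom_def by auto

end
locale setting = mac C for C :: "('o, 'm) moncat" +
  fixes A M :: 'o and m i \<mu> \<nu> d :: 'm
  assumes monoid: "is_monoid C A m i"
    and bimod: "is_bimodule C A m i M \<mu> \<nu>"
    and dh: "d \<in> Hom C A M"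
    and leibniz: "Comp C d m =
           Add C (Comp C \<nu> (Tens C d (Ide C A))) (Comp C \<mu> (Tens C (Ide C A) d))"
begin

abbreviation "U \<equiv> Unit C"
abbreviation "AA \<equiv> TOb C A A"
abbreviation "IA \<equiv> Ide C A"
abbreviation "IM \<equiv> Ide C M"
abbreviation "IU \<equiv> Ide C U"
abbreviation "L \<equiv> Comp C \<mu> (Tens C IA d)"
abbreviation "R \<equiv> Comp C \<nu> (Tens C d IA)"
abbreviation "T \<equiv> Comp C \<nu> (Tens C L IA)"

lemma Aob: "A \<in> Obj C" using monoid by (simp add: is_monoid_def)
lemma Mob: "M \<in> Obj C" using bimod by (simp add: is_bimodule_def)
lemma mh: "m \<in> Hom C AA A" using monoid by (simp add: is_monoid_def)
lemma ih: "i \<in> Hom C U A" using monoid by (simp add: is_monoid_def)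
lemma muh: "\<mu> \<in> Hom C (TOb C A M) M" using bimod by (simp add: is_bimodule_def)
lemma nuh: "\<nu> \<in> Hom C (TOb C M A) M" using bimod by (simp add: is_bimodule_def)
lemma nu_assoc: "Comp C \<nu> (Tens C \<nu> IA) = Comp C \<nu> (Comp C (Tens C IM m) (Assoc C M A A))"
  using bimod by (simp add: is_bimodule_def)
lemma nu_unit: "Comp C \<nu> (Tens C IM i) = RUnit C M"
  using bimod by (simp add: is_bimodule_def)
lemma mu_unit: "Comp C \<mu> (Tens C i IM) = LUnit C M"
  using bimod by (simp add: is_bimodule_def)

lemma IAh: "IA \<in> Hom C A A" by (rule ide_hom[OF Aob])
lemma IMh: "IM \<in> Hom C M M" by (rule ide_hom[OF Mob])
lemma IUh: "IU \<in> Hom C U U" by (rule ide_hom[OF unit_obj])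
lemma AAob: "AA \<in> Obj C" by (rule tob_obj[OF Aob Aob])
lemma IAAh: "Ide C AA \<in> Hom C AA AA" by (rule ide_hom[OF AAob])

lemma t_IAd: "Tens C IA d \<in> Hom C AA (TOb C A M)" using tens_hom[OF IAh dh] .
lemma t_dIA: "Tens C d IA \<in> Hom C AA (TOb C M A)" using tens_hom[OF dh IAh] .
lemma Lh: "L \<in> Hom C AA M" using comp_hom[OF t_IAd muh] .
lemma Rh: "R \<in> Hom C AA M" using comp_hom[OF t_dIA nuh] .
lemma t_LIA: "Tens C L IA \<in> Hom C (TOb C AA A) (TOb C M A)" using tens_hom[OF Lh IAh] .
lemma Th: "T \<in> Hom C (TOb C AA A) M" using comp_hom[OF t_LIA nuh] .

lemma E1: "Comp C R (Tens C IA i) = Comp C d (RUnit C A)"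
proof -
  have t1: "Tens C IA i \<in> Hom C (TOb C A U) AA" using tens_hom[OF IAh ih] .
  have t2: "Tens C IM i \<in> Hom C (TOb C M U) (TOb C M A)" using tens_hom[OF IMh ih] .
  have t3: "Tens C d IU \<in> Hom C (TOb C A U) (TOb C M U)" using tens_hom[OF dh IUh] .
  have "Comp C R (Tens C IA i) = Comp C \<nu> (Comp C (Tens C d IA) (Tens C IA i))"
    using comp_assoc[OF t1 t_dIA nuh] by simp
  also have "Comp C (Tens C d IA) (Tens C IA i) = Tens C (Comp C d IA) (Comp C IA i)"
    using interchange[OF IAh dh ih IAh] by simp
  also have "\<dots> = Tens C (Comp C IM d) (Comp C i IU)"
    using id_left[OF ih] id_right[OF dh] id_left[OF dh] id_right[OF ih] by simp
  also have "\<dots> = Comp C (Tens C IM i) (Tens C d IU)"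
    using interchange[OF dh IMh IUh ih] .
  also have "Comp C \<nu> \<dots> = Comp C (Comp C \<nu> (Tens C IM i)) (Tens C d IU)"
    using comp_assoc[OF t3 t2 nuh] .
  also have "\<dots> = Comp C d (RUnit C A)" using nu_unit runit_nat[OF dh] by simp
  finally show ?thesis .
qed

lemma E2: "Comp C L (Tens C i IA) = Comp C d (LUnit C A)"
proof -
  have t1: "Tens C i IA \<in> Hom C (TOb C U A) AA" using tens_hom[OF ih IAh] .
  have t2: "Tens C i IM \<in> Hom C (TOb C U M) (TOb C A M)" using tens_hom[OF ih IMh] .
  have t3: "Tens C IU d \<in> Hom C (TOb C U A) (TOb C U M)" using tens_hom[OF IUh dh] .
  have "Comp C L (Tens C i IA) = Comp C \<mu> (Comp C (Tens C IA d) (Tens C i IA))"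
    using comp_assoc[OF t1 t_IAd muh] by simp
  also have "Comp C (Tens C IA d) (Tens C i IA) = Tens C (Comp C IA i) (Comp C d IA)"
    using interchange[OF ih IAh IAh dh] by simp
  also have "\<dots> = Tens C (Comp C i IU) (Comp C IM d)"
    using id_left[OF ih] id_right[OF dh] id_left[OF dh] id_right[OF ih] by simp
  also have "\<dots> = Comp C (Tens C i IM) (Tens C IU d)"
    using interchange[OF IUh ih dh IMh] .
  also have "Comp C \<mu> \<dots> = Comp C (Comp C \<mu> (Tens C i IM)) (Tens C IU d)"
    using comp_assoc[OF t3 t2 muh] .
  also have "\<dots> = Comp C d (LUnit C A)" using mu_unit lunit_nat[OF dh] by simp
  finally show ?thesis .
qed

lemma E3: "Comp C T (Tens C (Ide C AA) i) = Comp C L (RUnit C AA)"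
proof -
  have t1: "Tens C (Ide C AA) i \<in> Hom C (TOb C AA U) (TOb C AA A)" using tens_hom[OF IAAh ih] .
  have t2: "Tens C IM i \<in> Hom C (TOb C M U) (TOb C M A)" using tens_hom[OF IMh ih] .
  have t3: "Tens C L IU \<in> Hom C (TOb C AA U) (TOb C M U)" using tens_hom[OF Lh IUh] .
  have "Comp C T (Tens C (Ide C AA) i) = Comp C \<nu> (Comp C (Tens C L IA) (Tens C (Ide C AA) i))"
    using comp_assoc[OF t1 t_LIA nuh] by simp
  also have "Comp C (Tens C L IA) (Tens C (Ide C AA) i) = Tens C (Comp C L (Ide C AA)) (Comp C IA i)"
    using interchange[OF IAAh Lh ih IAh] by simp
  also have "\<dots> = Tens C (Comp C IM L) (Comp C i IU)"
    using id_left[OF ih] id_right[OF Lh] id_left[OF Lh] id_right[OF ih] by simp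
  also have "\<dots> = Comp C (Tens C IM i) (Tens C L IU)"
    using interchange[OF Lh IMh IUh ih] .
  also have "Comp C \<nu> \<dots> = Comp C (Comp C \<nu> (Tens C IM i)) (Tens C L IU)"
    using comp_assoc[OF t3 t2 nuh] .
  also have "\<dots> = Comp C L (RUnit C AA)" using nu_unit runit_nat[OF Lh] by simp
  finally show ?thesis .
qed

lemma E4a: "Comp C R (Tens C m IA) = Comp C \<nu> (Tens C (Comp C d m) IA)"
proof -
  have t1: "Tens C m IA \<in> Hom C (TOb C AA A) AA" using tens_hom[OF mh IAh] .
  have "Comp C R (Tens C m IA) = Comp C \<nu> (Comp C (Tens C d IA) (Tens C m IA))"
    using comp_assoc[OF t1 t_dIA nuh] by simp
  also have "Comp C (Tens C d IA) (Tens C m IA) = Tens C (Comp C d m) (Comp C IA IA)"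
    using interchange[OF mh dh IAh IAh] by simp
  finally show ?thesis using id_left[OF IAh] by simp
qed

lemma E4b: "Comp C \<nu> (Tens C (Comp C d m) IA) = Add C (Comp C \<nu> (Tens C R IA)) T"
proof -
  have a: "IA \<in> Arr C" using homD(1)[OF IAh] .
  have t: "Tens C R IA \<in> Hom C (TOb C AA A) (TOb C M A)" using tens_hom[OF Rh IAh] .
  show ?thesis unfolding leibniz tens_add[OF Rh Lh a] comp_add[OF t t_LIA nuh] ..
qed

lemma E4c: "Comp C \<nu> (Tens C R IA) = Comp C R (Comp C (Tens C IA m) (Assoc C A A A))"
proof -
  have tt: "Tens C (Tens C d IA) IA \<in> Hom C (TOb C AA A) (TOb C (TOb C M A) A)"
    using tens_hom[OF t_dIA IAh] .
  have tnu: "Tens C \<nu> IA \<in> Hom C (TOb C (TOb C M A) A) (TOb C M A)" using tens_hom[OF nuh IAh] .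
  have aM: "Assoc C M A A \<in> Hom C (TOb C (TOb C M A) A) (TOb C M AA)" using assoc_hom[OF Mob Aob Aob] .
  have aA: "Assoc C A A A \<in> Hom C (TOb C AA A) (TOb C A AA)" using assoc_hom[OF Aob Aob Aob] .
  have tIMm: "Tens C IM m \<in> Hom C (TOb C M AA) (TOb C M A)" using tens_hom[OF IMh mh] .
  have tIAm: "Tens C IA m \<in> Hom C (TOb C A AA) AA" using tens_hom[OF IAh mh] .
  have tdIAA: "Tens C d (Ide C AA) \<in> Hom C (TOb C A AA) (TOb C M AA)" using tens_hom[OF dh IAAh] .
  have X: "Comp C (Tens C IM m) (Assoc C M A A) \<in> Hom C (TOb C (TOb C M A) A) (TOb C M A)"
    using comp_hom[OF aM tIMm] .
  have "Comp C \<nu> (Tens C R IA) = Comp C \<nu> (Tens C (Comp C \<nu> (Tens C d IA)) (Comp C IA IA))"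
    using id_left[OF IAh] by simp
  also have "\<dots> = Comp C \<nu> (Comp C (Tens C \<nu> IA) (Tens C (Tens C d IA) IA))"
    using interchange[OF t_dIA nuh IAh IAh] by simp
  also have "\<dots> = Comp C (Comp C \<nu> (Tens C \<nu> IA)) (Tens C (Tens C d IA) IA)"
    using comp_assoc[OF tt tnu nuh] .
  also have "\<dots> = Comp C (Comp C \<nu> (Comp C (Tens C IM m) (Assoc C M A A))) (Tens C (Tens C d IA) IA)"
    using nu_assoc by simp
  also have "\<dots> = Comp C \<nu> (Comp C (Comp C (Tens C IM m) (Assoc C M A A)) (Tens C (Tens C d IA) IA))"
    using comp_assoc[OF tt X nuh] by simp
  also have "Comp C (Comp C (Tens C IM m) (Assoc C M A A)) (Tens C (Tens C d IA) IA)
     = Comp C (Tens C IM m) (Comp C (Assoc C M A A) (Tens C (Tens C d IA) IA))"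
    using comp_assoc[OF tt aM tIMm] by simp
  also have "Comp C (Assoc C M A A) (Tens C (Tens C d IA) IA) = Comp C (Tens C d (Ide C AA)) (Assoc C A A A)"
    using assoc_nat[OF dh IAh IAh] tens_ide[OF Aob Aob] by simp
  also have "Comp C (Tens C IM m) (Comp C (Tens C d (Ide C AA)) (Assoc C A A A))
      = Comp C (Comp C (Tens C IM m) (Tens C d (Ide C AA))) (Assoc C A A A)"
    using comp_assoc[OF aA tdIAA tIMm] .
  also have "Comp C (Tens C IM m) (Tens C d (Ide C AA)) = Tens C (Comp C IM d) (Comp C m (Ide C AA))"
    using interchange[OF dh IMh IAAh mh] by simp
  also have "\<dots> = Tens C (Comp C d IA) (Comp C IA m)"
    using id_left[OF dh] id_right[OF dh] id_left[OF mh] id_right[OF mh] by simp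
  also have "\<dots> = Comp C (Tens C d IA) (Tens C IA m)"
    using interchange[OF IAh dh mh IAh] .
  also have "Comp C (Comp C (Tens C d IA) (Tens C IA m)) (Assoc C A A A)
     = Comp C (Tens C d IA) (Comp C (Tens C IA m) (Assoc C A A A))"
    using comp_assoc[OF aA tIAm t_dIA] by simp
  also have "Comp C \<nu> \<dots> = Comp C R (Comp C (Tens C IA m) (Assoc C A A A))"
    using comp_assoc[OF comp_hom[OF aA tIAm] t_dIA nuh] .
  finally show ?thesis .
qed

lemma epi_transfer:
  assumes "is_epi C X" "X \<in> Hom C a b" "Y \<in> Hom C a' b"
    and "\<And>g h c. g \<in> Hom C b c \<Longrightarrow> h \<in> Hom C b c \<Longrightarrow> Comp C g Y = Comp C h Y \<Longrightarrow> Comp C g X = Comp C h X"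
  shows "is_epi C Y"
  unfolding is_epi_def
proof (intro conjI ballI impI)
  show "Y \<in> Arr C" using homD(1)[OF assms(3)] .
  fix g h assume g: "g \<in> Arr C" and h: "h \<in> Arr C" and "Dom C g = Cod C Y" "Dom C h = Cod C Y"
    "Cod C g = Cod C h" and e: "Comp C g Y = Comp C h Y"
  then have gh: "g \<in> Hom C b (Cod C g)" and hh: "h \<in> Hom C b (Cod C g)"
    using homI[OF g] homI[OF h] homD[OF assms(3)] by auto
  have "Comp C g X = Comp C h X" using assms(4)[OF gh hh e] .
  then show "g = h" using assms(1) g h gh hh homD[OF assms(2)] homD[OF gh] homD[OF hh]
    unfolding is_epi_def by auto
qed

lemma iso_canc: assumes "is_iso C f" "f \<in> Hom C a b" "g \<in> Hom C b c" "h \<in> Hom C b c"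
  "Comp C g f = Comp C h f" shows "g = h"
  using iso_cancel[OF assms(1) homD(1)[OF assms(3)] homD(1)[OF assms(4)]] assms homD by metis

lemma sumfact: assumes g: "g \<in> Hom C M c"
  shows "Comp C g (Comp C d m) = Add C (Comp C g R) (Comp C g L)"
  unfolding leibniz using comp_add[OF Rh Lh g] .

lemma RtoL: assumes g: "g \<in> Hom C M c" and h: "h \<in> Hom C M c" and e: "Comp C g R = Comp C h R"
  shows "Comp C g L = Comp C h L"
proof -
  have t: "Tens C IA i \<in> Hom C (TOb C A U) AA" using tens_hom[OF IAh ih] .
  have ru: "RUnit C A \<in> Hom C (TOb C A U) A" using runit_hom[OF Aob] .
  have "Comp C (Comp C g d) (RUnit C A) = Comp C (Comp C h d) (RUnit C A)"
  proof -
    have "Comp C (Comp C g d) (RUnit C A) = Comp C (Comp C g R) (Tens C IA i)"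
      using comp_assoc[OF ru dh g] comp_assoc[OF t Rh g] E1 by simp
    also have "\<dots> = Comp C (Comp C h d) (RUnit C A)"
      using comp_assoc[OF ru dh h] comp_assoc[OF t Rh h] E1 e by simp
    finally show ?thesis .
  qed
  then have gd: "Comp C g d = Comp C h d"
    using iso_canc[OF runit_iso[OF Aob] ru comp_hom[OF dh g] comp_hom[OF dh h]] by blast
  have "Add C (Comp C g R) (Comp C g L) = Add C (Comp C h R) (Comp C h L)"
    using sumfact[OF g] sumfact[OF h] comp_assoc[OF mh dh g] comp_assoc[OF mh dh h] gd by simp
  then have "Add C (Comp C g L) (Comp C g R) = Add C (Comp C h L) (Comp C g R)"
    using e add_comm[OF comp_hom[OF Rh g] comp_hom[OF Lh g]] add_comm[OF comp_hom[OF Rh h] comp_hom[OF Lh h]]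
    by simp
  then show ?thesis using add_cancel[OF comp_hom[OF Lh g] comp_hom[OF Lh h] comp_hom[OF Rh g]] by blast
qed

lemma LtoR: assumes g: "g \<in> Hom C M c" and h: "h \<in> Hom C M c" and e: "Comp C g L = Comp C h L"
  shows "Comp C g R = Comp C h R"
proof -
  have t: "Tens C i IA \<in> Hom C (TOb C U A) AA" using tens_hom[OF ih IAh] .
  have ru: "LUnit C A \<in> Hom C (TOb C U A) A" using lunit_hom[OF Aob] .
  have "Comp C (Comp C g d) (LUnit C A) = Comp C (Comp C h d) (LUnit C A)"
  proof -
    have "Comp C (Comp C g d) (LUnit C A) = Comp C (Comp C g L) (Tens C i IA)"
      using comp_assoc[OF ru dh g] comp_assoc[OF t Lh g] E2 by simp
    also have "\<dots> = Comp C (Comp C h d) (LUnit C A)"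
      using comp_assoc[OF ru dh h] comp_assoc[OF t Lh h] E2 e by simp
    finally show ?thesis .
  qed
  then have gd: "Comp C g d = Comp C h d"
    using iso_canc[OF lunit_iso[OF Aob] ru comp_hom[OF dh g] comp_hom[OF dh h]] by blast
  have "Add C (Comp C g R) (Comp C g L) = Add C (Comp C h R) (Comp C g L)"
    using sumfact[OF g] sumfact[OF h] comp_assoc[OF mh dh g] comp_assoc[OF mh dh h] gd e by simp
  then show ?thesis using add_cancel[OF comp_hom[OF Rh g] comp_hom[OF Rh h] comp_hom[OF Lh g]] by blast
qed

lemma TtoL: assumes g: "g \<in> Hom C M c" and h: "h \<in> Hom C M c" and e: "Comp C g T = Comp C h T"
  shows "Comp C g L = Comp C h L"
proof -
  have t: "Tens C (Ide C AA) i \<in> Hom C (TOb C AA U) (TOb C AA A)" using tens_hom[OF IAAh ih] .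
  have ru: "RUnit C AA \<in> Hom C (TOb C AA U) AA" using runit_hom[OF AAob] .
  have "Comp C (Comp C g L) (RUnit C AA) = Comp C (Comp C g T) (Tens C (Ide C AA) i)"
    using comp_assoc[OF ru Lh g] comp_assoc[OF t Th g] E3 by simp
  also have "\<dots> = Comp C (Comp C h L) (RUnit C AA)"
    using comp_assoc[OF ru Lh h] comp_assoc[OF t Th h] E3 e by simp
  finally show ?thesis
    using iso_canc[OF runit_iso[OF AAob] ru comp_hom[OF Lh g] comp_hom[OF Lh h]] by blast
qed

lemma RtoT: assumes g: "g \<in> Hom C M c" and h: "h \<in> Hom C M c" and e: "Comp C g R = Comp C h R"
  shows "Comp C g T = Comp C h T"
proof -
  have aA: "Assoc C A A A \<in> Hom C (TOb C AA A) (TOb C A AA)" using assoc_hom[OF Aob Aob Aob] .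
  have tIAm: "Tens C IA m \<in> Hom C (TOb C A AA) AA" using tens_hom[OF IAh mh] .
  have Y: "Comp C (Tens C IA m) (Assoc C A A A) \<in> Hom C (TOb C AA A) AA" using comp_hom[OF aA tIAm] .
  have tm: "Tens C m IA \<in> Hom C (TOb C AA A) AA" using tens_hom[OF mh IAh] .
  have tR: "Tens C R IA \<in> Hom C (TOb C AA A) (TOb C M A)" using tens_hom[OF Rh IAh] .
  have key: "\<And>k. k \<in> Hom C M c \<Longrightarrow> Comp C (Comp C k R) (Tens C m IA) =
      Add C (Comp C (Comp C k R) (Comp C (Tens C IA m) (Assoc C A A A))) (Comp C k T)"
  proof -
    fix k assume k: "k \<in> Hom C M c"
    have "Comp C (Comp C k R) (Tens C m IA) = Comp C k (Add C (Comp C \<nu> (Tens C R IA)) T)"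
      using comp_assoc[OF tm Rh k] E4a E4b by simp
    also have "\<dots> = Add C (Comp C k (Comp C \<nu> (Tens C R IA))) (Comp C k T)"
      using comp_add[OF comp_hom[OF tR nuh] Th k] .
    also have "Comp C k (Comp C \<nu> (Tens C R IA)) = Comp C (Comp C k R) (Comp C (Tens C IA m) (Assoc C A A A))"
      using E4c comp_assoc[OF Y Rh k] by simp
    finally show "Comp C (Comp C k R) (Tens C m IA) =
      Add C (Comp C (Comp C k R) (Comp C (Tens C IA m) (Assoc C A A A))) (Comp C k T)" .
  qed
  have "Add C (Comp C g T) (Comp C (Comp C g R) (Comp C (Tens C IA m) (Assoc C A A A)))
     = Add C (Comp C h T) (Comp C (Comp C g R) (Comp C (Tens C IA m) (Assoc C A A A)))"
    using key[OF g] key[OF h] e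
      add_comm[OF comp_hom[OF Y comp_hom[OF Rh g]] comp_hom[OF Th g]]
      add_comm[OF comp_hom[OF Y comp_hom[OF Rh h]] comp_hom[OF Th h]] by simp
  then show ?thesis using add_cancel[OF comp_hom[OF Th g] comp_hom[OF Th h] comp_hom[OF Y comp_hom[OF Rh g]]] by blast
qed

lemma main: "(is_epi C L \<longleftrightarrow> is_epi C R) \<and> (is_epi C L \<longleftrightarrow> is_epi C T)"
proof -
  have 1: "is_epi C L \<Longrightarrow> is_epi C R" using epi_transfer[OF _ Lh Rh] RtoL by blast
  have 2: "is_epi C R \<Longrightarrow> is_epi C L" using epi_transfer[OF _ Rh Lh] LtoR by blast
  have 3: "is_epi C L \<Longrightarrow> is_epi C T" using epi_transfer[OF _ Lh Th] TtoL by blast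
  have 4: "is_epi C T \<Longrightarrow> is_epi C R" using epi_transfer[OF _ Th Rh] RtoT by blast
  show ?thesis using 1 2 3 4 by blast
qed

end
theorem proposition3p5:
  fixes C :: "('o, 'm) moncat"
    and A M :: 'o and m i \<mu> \<nu> d :: 'm
  assumes "monoidal_additive_category C"
    and "is_monoid C A m i"
    and "is_bimodule C A m i M \<mu> \<nu>"
    and "d \<in> Hom C A M"
    and leibniz: "Comp C d m =
           Add C (Comp C \<nu> (Tens C d (Ide C A))) (Comp C \<mu> (Tens C (Ide C A) d))"
  shows "(is_epi C (Comp C \<mu> (Tens C (Ide C A) d))
            \<longleftrightarrow> is_epi C (Comp C \<nu> (Tens C d (Ide C A))))
       \<and> (is_epi C (Comp C \<mu> (Tens C (Ide C A) d))
            \<longleftrightarrow> is_epi C (Comp C \<nu> (Tens C (Comp C \<mu> (Tens C (Ide C A) d)) (Ide C A))))"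
  proof -
  interpret setting C A M m i \<mu> \<nu> d
    using assms by (simp add: setting_def setting_axioms_def mac_def)
  show ?thesis using main by blast
qed

end
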